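(* Let $n$ be an integer with $n=u^4+v^4=r^4+s^4$ for integers $u,v,r,s$ satisfying $\gcd(u,v,r,s)=1$. If $p$ is an odd prime with $p\mid n$, then $p\equiv 1\pmod 8$. *)

theory Defs
  imports "HOL-Number_Theory.Number_Theory"
begin

end

theory Submission
  imports Defs
begin

lemma dvd8_not4: "(d::nat) dvd 8 \<Longrightarrow> \<not> d dvd 4 \<Longrightarrow> d = 8"
proof -
  assume a: "d dvd 8" "\<not> d dvd 4"
  then have "d \<le> 8" by (simp add: dvd_imp_le)
  then have "d \<in> {0,1,2,3,4,5,6,7,8}" by auto
  with a show ?thesis by auto
qed

lemma key:
  fixes x y :: int and p :: nat
  assumes pr: "prime p" and od: "odd p"
    and dv: "int p dvd x ^ 4 + y ^ 4" and nd: "\<not> int p dvd x"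
  shows "[p = 1] (mod 8)"
proof -
  have pri: "prime (int p)" using pr by simp
  have "coprime x (int p)" using nd pri
    by (metis coprime_commute prime_imp_coprime)
  then obtain w where w: "[x * w = 1] (mod int p)" using cong_solve_coprime_int by blast
  define t where "t = nat ((y*w) mod int p)"
  have p0: "int p > 0" using pr prime_gt_0_nat by simp
  have tcong: "[int t = y * w] (mod int p)"
    unfolding t_def using p0 by (simp add: cong_def)
  have w4: "[1 = (x*w)^4] (mod int p)" using cong_pow[OF w, of 4] by (simp add: cong_sym)
  have "[int t ^ 4 + 1 = (y*w)^4 + (x*w)^4] (mod int p)"
    using w4 tcong by (intro cong_add cong_pow) auto
  moreover have "(y*w)^4 + (x*w)^4 = w^4 * (x^4+y^4)" by (simp add: algebra_simps power_mult_distrib)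
  moreover have "[w^4 * (x^4+y^4) = 0] (mod int p)" using dv by (simp add: cong_0_iff)
  ultimately have c: "[int t ^ 4 + 1 = 0] (mod int p)" by (metis cong_trans)
  have c8: "[(int t ^ 4 + 1) * (int t ^ 4 - 1) = 0 * (int t ^ 4 - 1)] (mod int p)"
    using c by (intro cong_mult cong_refl)
  then have "[int t ^ 8 - 1 = 0] (mod int p)" by (simp add: algebra_simps power_mult_distrib flip: power_add)
  then have "[int t ^ 8 = 1] (mod int p)" by (simp add: cong_iff_dvd_diff)
  then have "[int (t ^ 8) = int 1] (mod int p)" by simp
  then have t8: "[t ^ 8 = 1] (mod p)" using cong_int_iff by blast
  have n4: "\<not> [t ^ 4 = 1] (mod p)"
  proof
    assume "[t ^ 4 = 1] (mod p)"
    then have "[int t ^ 4 = 1] (mod int p)" by (metis cong_int_iff of_nat_1 of_nat_power)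
    then have "[int t ^ 4 + 1 = 1 + 1] (mod int p)" by (intro cong_add cong_refl)
    with c have "[2 = 0] (mod int p)" by (metis cong_sym cong_trans one_add_one)
    then have "int p dvd 2" by (simp add: cong_0_iff)
    then have "p dvd 2" by presburger
    then have "p \<le> 2" by (simp add: dvd_imp_le)
    with od pr show False using prime_ge_2_nat[OF pr] by (metis dual_order.antisym even_numeral)
  qed
  have "ord p t = 8" using t8 n4 dvd8_not4 ord_divides by metis
  have ndt: "\<not> p dvd t"
  proof
    assume "p dvd t"
    then have "int p dvd int t" by simp
    then have "int p dvd int t ^ 4" using dvd_power[of 4 "int t"] dvd_trans by (metis zero_less_numeral)
    with c have "int p dvd 1"
      by (metis cong_0_iff cong_dvd_iff cong_iff_dvd_diff dvd_add_right_iff)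
    then show False using pri by (simp add: prime_int_iff)
  qed
  have "[t ^ (p - 1) = 1] (mod p)" using fermat_theorem[OF pr ndt] .
  then have "8 dvd p - 1" using \<open>ord p t = 8\<close> ord_divides by metis
  moreover have "p \<ge> 1" using prime_ge_2_nat[OF pr] by simp
  ultimately show ?thesis by (simp add: cong_def) presburger
qed


lemma dvd_of_pow4:
  fixes a :: int and p :: nat
  assumes "prime p" "int p dvd a ^ 4" shows "int p dvd a"
  using assms prime_dvd_power[of "int p" a 4] by simp

theorem proposition3p1:
  fixes n u v r s :: int and p :: nat
  assumes "n = u ^ 4 + v ^ 4"
    and "n = r ^ 4 + s ^ 4"
    and "gcd (gcd u v) (gcd r s) = 1"
    and "prime p" and "odd p"
    and "int p dvd n"
  shows "[p = 1] (mod 8)"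
proof (cases "int p dvd u")
  case False
  then show ?thesis using key[of p u v] assms by simp
next
  case pu: True
  have "int p dvd u ^ 4" using pu by (simp add: dvd_power_same[of _ _ 4, simplified] dvd_mult2 power4_eq_xxxx)
  then have "int p dvd v ^ 4" using assms(1,6) by (metis dvd_add_right_iff)
  then have pv: "int p dvd v" using dvd_of_pow4 assms(4) by blast
  show ?thesis
  proof (cases "int p dvd r")
    case False
    then show ?thesis using key[of p r s] assms by simp
  next
    case pr: True
    have "int p dvd r ^ 4" using pr by (simp add: power4_eq_xxxx)
    then have "int p dvd s ^ 4" using assms(2,6) by (metis dvd_add_right_iff)
    then have ps: "int p dvd s" using dvd_of_pow4 assms(4) by blast
    have "int p dvd gcd (gcd u v) (gcd r s)" using pu pv pr ps by simp
    then have "int p dvd 1" using assms(3) by simp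
    then show ?thesis using assms(4) by (simp add: prime_int_iff)
  qed
qed

end
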